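(* For $n\in\mathbb N$ let $\mu_n=\{p/n:p\in\mathbb Z,\ |p/n|\le n\}$, and let $\Lambda_{\mathbb Q}=\{\mu_{m!}:m\in\mathbb N\}$. Let $I$ be a fine ideal of $\mathfrak F(\mathcal P_{fin}(\mathbb Q),\mathbb R)$ containing $I_{0,\Lambda_{\mathbb Q}}$ and let $P$ be the probability of the NAP-space produced by $(\mathbb Q,1,I)$. Then for all rationals $a<b$, $$P([a,b)_{\mathbb Q})=(b-a)\,P([0,1)_{\mathbb Q}),$$ equivalently $\mathfrak n([a,b)_{\mathbb Q})=(b-a)\,\mathfrak n([0,1)_{\mathbb Q})$; consequently, for rationals with $[a_0,b_0)_{\mathbb Q}\subseteq[a_1,b_1)_{\mathbb Q}$, $a_0<b_0$, $a_1<b_1$, one has $P([a_0,b_0)_{\mathbb Q}\mid[a_1,b_1)_{\mathbb Q})=\dfrac{b_0-a_0}{b_1-a_1}$.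
   Context: $[a,b)_{\mathbb Q}=\{x\in\mathbb Q:a\le x<b\}$. $\mathcal P_{fin}(\Omega)$ is the set of finite subsets of $\Omega$ and $\mathfrak F=\mathfrak F(\mathcal P_{fin}(\Omega),\mathbb R)$ the real algebra of functions $\mathcal P_{fin}(\Omega)\to\mathbb R$ with pointwise operations. For $\omega\in\Omega$, $\chi_\lambda(\omega)=1$ if $\omega\in\lambda$, else $0$. An ideal $I$ of $\mathfrak F$ is fine if it is maximal and $\lambda\mapsto 1-\chi_\lambda(\omega)$ lies in $I$ for every $\omega\in\Omega$. For $\Lambda\subseteq\mathcal P_{fin}(\Omega)$, $I_{0,\Lambda}=\{\varphi\in\mathfrak F:\varphi(\lambda)=0\text{ for all }\lambda\in\Lambda\}$. The NAP-space produced by $(\Omega,w,I)$ ($w:\Omega\to\mathbb R^+$, $I$ fine) has range field $\mathfrak F/I$, $J$ the canonical projection $\varphi\mapsto\varphi+I$, and $P(A)=J\big(\lambda\mapsto\sum_{\omega\in A\cap\lambda}w(\omega)\big)/J\big(\lambda\mapsto\sum_{\omega\in\lambda}w(\omega)\big)$; conditional probability is $P(A\mid B)=P(A\cap B)/P(B)$. For constant weight $w\equiv1$ (a fair space), the numerosity of $A$ is $\mathfrak n(A)=P(A)/P(\{\omega\})$ for any $\omega\in\Omega$, equivalently $\mathfrak n(A)=J(\lambda\mapsto|A\cap\lambda|)$. *)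

theory Defs
  imports Complex_Main "HOL-Algebra.QuotRing" "HOL-Library.FSet"
begin

text \<open>The real algebra F(P_fin(Omega), R) of all real functions on finite subsets
  of Omega, with pointwise operations.  Finite subsets are modelled by the type 'a fset.\<close>
definition F_ring :: "('a fset \<Rightarrow> real) ring" where
  "F_ring = \<lparr>carrier = UNIV, mult = (\<lambda>f g x. f x * g x), one = (\<lambda>_. 1),
             zero = (\<lambda>_. 0), add = (\<lambda>f g x. f x + g x)\<rparr>"

definition chi :: "'a fset \<Rightarrow> 'a \<Rightarrow> real" where
  "chi L w = (if w |\<in>| L then 1 else 0)"

definition fine_ideal :: "('a fset \<Rightarrow> real) set \<Rightarrow> bool" where
  "fine_ideal I \<longleftrightarrow> maximalideal I F_ring \<and> (\<forall>w. (\<lambda>L. 1 - chi L w) \<in> I)"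

definition I0 :: "'a fset set \<Rightarrow> ('a fset \<Rightarrow> real) set" where
  "I0 \<Lambda> = {\<phi>. \<forall>L\<in>\<Lambda>. \<phi> L = 0}"

definition Jproj :: "('a fset \<Rightarrow> real) set \<Rightarrow> ('a fset \<Rightarrow> real) \<Rightarrow> ('a fset \<Rightarrow> real) set" where
  "Jproj I \<phi> = I +>\<^bsub>F_ring\<^esub> \<phi>"

definition NAP_prob :: "('a \<Rightarrow> real) \<Rightarrow> ('a fset \<Rightarrow> real) set \<Rightarrow> 'a set \<Rightarrow> ('a fset \<Rightarrow> real) set" where
  "NAP_prob w I A =
     Jproj I (\<lambda>L. \<Sum>x\<in>A \<inter> fset L. w x)
       \<otimes>\<^bsub>F_ring Quot I\<^esub> inv\<^bsub>F_ring Quot I\<^esub> Jproj I (\<lambda>L. \<Sum>x\<in>fset L. w x)"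

definition NAP_cond_prob :: "('a \<Rightarrow> real) \<Rightarrow> ('a fset \<Rightarrow> real) set \<Rightarrow> 'a set \<Rightarrow> 'a set \<Rightarrow> ('a fset \<Rightarrow> real) set" where
  "NAP_cond_prob w I A B =
     NAP_prob w I (A \<inter> B) \<otimes>\<^bsub>F_ring Quot I\<^esub> inv\<^bsub>F_ring Quot I\<^esub> NAP_prob w I B"

definition numerosity :: "('a fset \<Rightarrow> real) set \<Rightarrow> 'a set \<Rightarrow> ('a fset \<Rightarrow> real) set" where
  "numerosity I A = Jproj I (\<lambda>L. real (card (A \<inter> fset L)))"

definition rconst :: "('a fset \<Rightarrow> real) set \<Rightarrow> real \<Rightarrow> ('a fset \<Rightarrow> real) set" where
  "rconst I r = Jproj I (\<lambda>_. r)"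

definition mu_set :: "nat \<Rightarrow> rat set" where
  "mu_set n = {(of_int p / of_nat n :: rat) | p :: int. \<bar>(of_int p / of_nat n :: rat)\<bar> \<le> of_nat n}"

definition Lambda_Q :: "rat fset set" where
  "Lambda_Q = {L. \<exists>m. fset L = mu_set (fact m)}"

definition ratIco :: "rat \<Rightarrow> rat \<Rightarrow> rat set" where
  "ratIco a b = {x. a \<le> x \<and> x < b}"

end

theory Submission
  imports Defs
begin

lemma F_cring: "cring F_ring"
proof (rule cringI)
  show "abelian_group F_ring"
    by (rule abelian_groupI) (auto simp: F_ring_def intro!: exI[of _ "\<lambda>x. - _ x"])
  show "comm_monoid F_ring"
    by (rule comm_monoidI) (auto simp: F_ring_def)
qed (auto simp: F_ring_def algebra_simps)

lemma F_ring_simps[simp]: "carrier F_ring = UNIV" "mult F_ring f g = (\<lambda>x. f x * g x)"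
  "one F_ring = (\<lambda>_. 1)" "zero F_ring = (\<lambda>_. 0)" "add F_ring f g = (\<lambda>x. f x + g x)"
  by (auto simp: F_ring_def)

lemma F_minus[simp]: "a_minus F_ring f g = (\<lambda>x. f x - g x)"
proof -
  interpret cring F_ring by (rule F_cring)
  have "\<ominus>\<^bsub>F_ring\<^esub> g = (\<lambda>x. - g x)"
    by (rule minus_equality) auto
  thus ?thesis by (simp add: minus_eq)
qed

context
  fixes I :: "('a fset \<Rightarrow> real) set"
  assumes mx: "maximalideal I F_ring"
begin

interpretation F: cring F_ring by (rule F_cring)
interpretation M: maximalideal I F_ring by (rule mx)

lemma Q_field: "field (F_ring Quot I)"
  by (rule M.quotient_is_field[OF F_cring])

lemma J_mult: "Jproj I f \<otimes>\<^bsub>F_ring Quot I\<^esub> Jproj I g = Jproj I (\<lambda>x. f x * g x)"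
  unfolding Jproj_def using M.rcoset_mult_add by (simp add: FactRing_def)

lemma I_neg: "(\<lambda>x. f x - g x) \<in> I \<Longrightarrow> (\<lambda>x. g x - f x) \<in> I"
proof -
  assume a: "(\<lambda>x. f x - g x) \<in> I"
  have "\<ominus>\<^bsub>F_ring\<^esub> (\<lambda>x. f x - g x) \<in> I" by (rule M.a_inv_closed[OF a])
  moreover have "\<ominus>\<^bsub>F_ring\<^esub> (\<lambda>x. f x - g x) = (\<lambda>x. g x - f x)"
    by (rule F.minus_equality) auto
  ultimately show ?thesis by simp
qed

lemma J_eq: "Jproj I f = Jproj I g \<longleftrightarrow> (\<lambda>x. f x - g x) \<in> I"
proof
  assume "Jproj I f = Jproj I g"
  then have "g \<in> I +>\<^bsub>F_ring\<^esub> f" unfolding Jproj_def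
    using M.a_repr_independenceD by auto
  then have "(\<lambda>x. g x - f x) \<in> I"
    using M.a_rcos_module_minus[OF F.ring_axioms, of f g] by simp
  then show "(\<lambda>x. f x - g x) \<in> I" by (rule I_neg)
next
  assume "(\<lambda>x. f x - g x) \<in> I"
  then have "(\<lambda>x. g x - f x) \<in> I" by (rule I_neg)
  then have "g \<in> I +>\<^bsub>F_ring\<^esub> f"
    using M.a_rcos_module_minus[OF F.ring_axioms, of f g] by simp
  then show "Jproj I f = Jproj I g" unfolding Jproj_def
    using M.a_repr_independence' by auto
qed

end

lemma scale_rat:
  fixes a :: rat
  assumes "q > 0" "a = of_int p / of_int q" "nat q dvd N" "N > 0"
  shows "\<exists>A::int. a = of_int A / of_nat N"
proof -
  obtain k where k: "N = nat q * k" using assms(3) by auto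
  have kpos: "k > 0" using k assms(4) by (cases k) auto
  have "of_nat N = (of_int q * of_nat k :: rat)" using k assms(1) by simp
  then have "of_int (p * int k) / of_nat N = (of_int p / of_int q :: rat)"
    using kpos assms(1) by (simp add: field_simps)
  then show ?thesis using assms(2) by metis
qed

lemma ico_mu:
  fixes a b :: rat
  assumes N: "N > 0" and a: "a = of_int A / of_nat N" and b: "b = of_int B / of_nat N"
    and ha: "\<bar>a\<bar> \<le> of_nat N" and hb: "\<bar>b\<bar> \<le> of_nat N"
  shows "ratIco a b \<inter> mu_set N = (\<lambda>p. of_int p / of_nat N) ` {A..<B}"
proof (intro equalityI subsetI)
  fix x :: rat assume "x \<in> ratIco a b \<inter> mu_set N"
  then obtain p where x: "x = of_int p / of_nat N" and "a \<le> x" "x < b"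
    by (auto simp: ratIco_def mu_set_def)
  then have "of_int A / of_nat N \<le> (of_int p / of_nat N :: rat)" "(of_int p / of_nat N :: rat) < of_int B / of_nat N"
    using a b by auto
  then have "of_int A \<le> (of_int p :: rat)" "(of_int p :: rat) < of_int B" using N
    by (simp_all add: divide_le_cancel divide_less_cancel)
  then have "A \<le> p" "p < B" by simp_all
  then show "x \<in> (\<lambda>p. of_int p / of_nat N) ` {A..<B}" using x by auto
next
  fix x :: rat assume "x \<in> (\<lambda>p. of_int p / of_nat N) ` {A..<B}"
  then obtain p where pin: "p \<in> {A..<B}" and x: "x = of_int p / of_nat N" by (rule imageE)
  from pin have p: "A \<le> p" "p < B" by simp_all
  have "(of_int A :: rat) \<le> of_int p" "(of_int p :: rat) < of_int B" using p by simp_all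
  then have "a \<le> x" "x < b" using a b x N
    by (simp_all add: divide_le_cancel divide_less_cancel)
  moreover have "\<bar>x\<bar> \<le> of_nat N" using ha hb \<open>a \<le> x\<close> \<open>x < b\<close> by auto
  ultimately show "x \<in> ratIco a b \<inter> mu_set N" using x
    by (auto simp: ratIco_def mu_set_def)
qed

lemma count_exact:
  fixes a b :: rat
  assumes N: "N > 0" and a: "a = of_int A / of_nat N" and b: "b = of_int B / of_nat N"
    and ha: "\<bar>a\<bar> \<le> of_nat N" and hb: "\<bar>b\<bar> \<le> of_nat N" and ab: "a < b"
  shows "real (card (ratIco a b \<inter> mu_set N)) = of_rat (b - a) * real N"
proof -
  have inj: "inj_on (\<lambda>p. of_int p / of_nat N :: rat) {A..<B}"
    using N by (auto simp: inj_on_def)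
  have "A < B" using ab a b N by (simp add: divide_less_cancel)
  have "card (ratIco a b \<inter> mu_set N) = nat (B - A)"
    using ico_mu[OF assms(1-5)] card_image[OF inj] by simp
  then have "real (card (ratIco a b \<inter> mu_set N)) = real_of_int (B - A)"
    using \<open>A < B\<close> by simp
  also have "\<dots> = of_rat (b - a) * real N"
    using a b N by (simp add: of_rat_divide of_rat_diff diff_divide_distrib[symmetric])
  finally show ?thesis .
qed

lemma count_ev:
  assumes ab: "a < b"
  shows "\<exists>M. \<forall>m\<ge>M. real (card (ratIco a b \<inter> mu_set (fact m))) = of_rat (b - a) * real (fact m :: nat)"
proof -
  obtain pa qa where qa: "quotient_of a = (pa, qa)" by (cases "quotient_of a")
  obtain pb qb where qb: "quotient_of b = (pb, qb)" by (cases "quotient_of b")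
  have qa0: "qa > 0" using quotient_of_denom_pos[OF qa] .
  have qb0: "qb > 0" using quotient_of_denom_pos[OF qb] .
  have ea: "a = of_int pa / of_int qa" using quotient_of_div[OF qa] .
  have eb: "b = of_int pb / of_int qb" using quotient_of_div[OF qb] .
  define M where "M = nat qa + nat qb + nat \<lceil>\<bar>a\<bar>\<rceil> + nat \<lceil>\<bar>b\<bar>\<rceil>"
  show ?thesis
  proof (intro exI allI impI)
    fix m assume m: "M \<le> m"
    define N :: nat where "N = fact m"
    have N0: "N > 0" by (simp add: N_def)
    have mN: "m \<le> N" unfolding N_def by (rule fact_ge_self)
    have "nat qa dvd N" unfolding N_def using m qa0 by (intro dvd_fact) (auto simp: M_def)
    then obtain A where A: "a = of_int A / of_nat N" using scale_rat[OF qa0 ea _ N0] by blast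
    have "nat qb dvd N" unfolding N_def using m qb0 by (intro dvd_fact) (auto simp: M_def)
    then obtain B where B: "b = of_int B / of_nat N" using scale_rat[OF qb0 eb _ N0] by blast
    have "\<bar>a\<bar> \<le> of_int \<lceil>\<bar>a\<bar>\<rceil>" by linarith
    also have "\<dots> \<le> of_nat m" using m unfolding M_def by linarith
    also have "\<dots> \<le> of_nat N" using mN by simp
    finally have ha: "\<bar>a\<bar> \<le> of_nat N" .
    have "\<bar>b\<bar> \<le> of_int \<lceil>\<bar>b\<bar>\<rceil>" by linarith
    also have "\<dots> \<le> of_nat m" using m unfolding M_def by linarith
    also have "\<dots> \<le> of_nat N" using mN by simp
    finally have hb: "\<bar>b\<bar> \<le> of_nat N" .
    show "real (card (ratIco a b \<inter> mu_set (fact m))) = of_rat (b - a) * real (fact m :: nat)"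
      using count_exact[OF N0 A B ha hb ab] by (simp add: N_def)
  qed
qed


lemma V_lemma:
  fixes I :: "(rat fset \<Rightarrow> real) set"
  assumes fine: "fine_ideal I" and contains: "I0 Lambda_Q \<subseteq> I"
    and ev: "\<exists>M. \<forall>m\<ge>M. \<forall>L. fset L = mu_set (fact m) \<longrightarrow> \<phi> L = 0"
  shows "\<phi> \<in> I"
proof -
  interpret F: cring F_ring by (rule F_cring)
  interpret M: maximalideal I F_ring using fine by (simp add: fine_ideal_def)
  obtain M where hM: "\<And>m L. m \<ge> M \<Longrightarrow> fset L = mu_set (fact m) \<Longrightarrow> \<phi> L = 0" using ev by blast
  define w :: rat where "w = of_nat (fact M) + 1"
  have wnot: "w \<notin> mu_set (fact k)" if "k < M" for k
  proof
    assume "w \<in> mu_set (fact k)"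
    then have "\<bar>w\<bar> \<le> of_nat (fact k)" by (auto simp: mu_set_def)
    moreover have "(fact k :: nat) \<le> fact M" using that by (intro fact_mono) simp
    then have "(of_nat (fact k) :: rat) \<le> of_nat (fact M)" by (simp only: of_nat_le_iff)
    ultimately have "w \<le> of_nat (fact M)" by linarith
    then show False unfolding w_def by simp
  qed
  have h1: "(\<lambda>L. 1 - chi L w) \<in> I" using fine by (simp add: fine_ideal_def)
  have p1: "(\<lambda>L. \<phi> L * (1 - chi L w)) \<in> I"
    using M.I_l_closed[OF h1, of \<phi>] by simp
  have p2: "(\<lambda>L. \<phi> L * chi L w) \<in> I"
  proof -
    have "(\<lambda>L. \<phi> L * chi L w) \<in> I0 Lambda_Q"
    proof (unfold I0_def, intro CollectI ballI)
      fix L assume "L \<in> Lambda_Q"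
      then obtain m where m: "fset L = mu_set (fact m)" by (auto simp: Lambda_Q_def)
      show "\<phi> L * chi L w = 0"
      proof (cases "m \<ge> M")
        case True then show ?thesis using hM m by simp
      next
        case False then have "w \<notin> fset L" using wnot m by simp
        then show ?thesis by (simp add: chi_def)
      qed
    qed
    then show ?thesis using contains by blast
  qed
  have "(\<lambda>L. \<phi> L * (1 - chi L w)) \<oplus>\<^bsub>F_ring\<^esub> (\<lambda>L. \<phi> L * chi L w) \<in> I"
    by (rule M.a_closed[OF p1 p2])
  moreover have "(\<lambda>L. \<phi> L * (1 - chi L w)) \<oplus>\<^bsub>F_ring\<^esub> (\<lambda>L. \<phi> L * chi L w) = \<phi>"
    by (simp add: algebra_simps)
  ultimately show ?thesis by simp
qed

lemma E_lemma:
  fixes I :: "(rat fset \<Rightarrow> real) set"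
  assumes fine: "fine_ideal I" and contains: "I0 Lambda_Q \<subseteq> I"
    and ev: "\<exists>M. \<forall>m\<ge>M. \<forall>L. fset L = mu_set (fact m) \<longrightarrow> f L = g L"
  shows "Jproj I f = Jproj I g"
proof -
  have mx: "maximalideal I F_ring" using fine by (simp add: fine_ideal_def)
  have "(\<lambda>L. f L - g L) \<in> I"
    by (rule V_lemma[OF fine contains]) (use ev in auto)
  then show ?thesis using J_eq[OF mx] by blast
qed

lemma U_lemma:
  fixes I :: "(rat fset \<Rightarrow> real) set"
  assumes fine: "fine_ideal I" and contains: "I0 Lambda_Q \<subseteq> I"
    and ev: "\<exists>M. \<forall>m\<ge>M. \<forall>L. fset L = mu_set (fact m) \<longrightarrow> f L * g L = 1"
  shows "inv\<^bsub>F_ring Quot I\<^esub> (Jproj I f) = Jproj I g"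
proof -
  have mx: "maximalideal I F_ring" using fine by (simp add: fine_ideal_def)
  interpret F: cring F_ring by (rule F_cring)
  interpret M: maximalideal I F_ring by (rule mx)
  interpret Q: field "F_ring Quot I" by (rule Q_field[OF mx])
  have one: "\<one>\<^bsub>F_ring Quot I\<^esub> = Jproj I (\<lambda>_. 1)"
    by (simp add: FactRing_def Jproj_def)
  have fg: "Jproj I f \<otimes>\<^bsub>F_ring Quot I\<^esub> Jproj I g = \<one>\<^bsub>F_ring Quot I\<^esub>"
    unfolding one J_mult[OF mx] by (rule E_lemma[OF fine contains]) (use ev in auto)
  have gf: "Jproj I g \<otimes>\<^bsub>F_ring Quot I\<^esub> Jproj I f = \<one>\<^bsub>F_ring Quot I\<^esub>"
    unfolding one J_mult[OF mx] by (rule E_lemma[OF fine contains]) (use ev in \<open>auto simp: mult.commute\<close>)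
  have carr: "Jproj I h \<in> carrier (F_ring Quot I)" for h
    unfolding Jproj_def using ring_hom_closed[OF M.rcos_ring_hom] by simp
  show ?thesis by (rule Q.inv_char[OF carr carr fg gf])
qed

lemma zero_mu: "(0::rat) \<in> mu_set N"
  unfolding mu_set_def by (rule CollectI, rule exI[of _ 0]) simp

lemma ne_mu: "fset L = mu_set N \<Longrightarrow> card (fset L) > 0"
proof -
  assume a: "fset L = mu_set N"
  then have "fset L \<noteq> {}" using zero_mu by auto
  then show ?thesis by (metis card_gt_0_iff finite_fset)
qed

lemma P_eq:
  fixes I :: "(rat fset \<Rightarrow> real) set"
  assumes fine: "fine_ideal I" and contains: "I0 Lambda_Q \<subseteq> I"
  shows "NAP_prob (\<lambda>_. 1) I A = Jproj I (\<lambda>L. real (card (A \<inter> fset L)) / real (card (fset L)))"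
proof -
  have mx: "maximalideal I F_ring" using fine by (simp add: fine_ideal_def)
  have "inv\<^bsub>F_ring Quot I\<^esub> Jproj I (\<lambda>L. \<Sum>x\<in>fset L. (1::real)) = Jproj I (\<lambda>L. 1 / real (card (fset L)))"
  proof (rule U_lemma[OF fine contains], rule exI[of _ 0], intro allI impI)
    fix m L assume "0 \<le> m" "fset L = mu_set (fact m)"
    then have "card (fset L) > 0" by (rule_tac ne_mu) 
    then show "(\<Sum>x\<in>fset L. (1::real)) * (1 / real (card (fset L))) = 1" by (simp add: card_gt_0_iff)
  qed
  then show ?thesis unfolding NAP_prob_def by (simp add: J_mult[OF mx])
qed

lemma divmul1: "(x::real) \<noteq> 0 \<Longrightarrow> y \<noteq> 0 \<Longrightarrow> x / y * (y / x) = 1"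
  by simp

theorem mainTheorem15:
  fixes I :: "(rat fset \<Rightarrow> real) set"
  assumes fine: "fine_ideal I"
    and contains: "I0 Lambda_Q \<subseteq> I"
  shows "(\<forall>a b. a < b \<longrightarrow>
            NAP_prob (\<lambda>_. 1) I (ratIco a b)
              = rconst I (of_rat (b - a)) \<otimes>\<^bsub>F_ring Quot I\<^esub> NAP_prob (\<lambda>_. 1) I (ratIco 0 1))
       \<and> (\<forall>a b. a < b \<longrightarrow>
            numerosity I (ratIco a b)
              = rconst I (of_rat (b - a)) \<otimes>\<^bsub>F_ring Quot I\<^esub> numerosity I (ratIco 0 1))
       \<and> (\<forall>a0 b0 a1 b1. a0 < b0 \<longrightarrow> a1 < b1 \<longrightarrow> ratIco a0 b0 \<subseteq> ratIco a1 b1 \<longrightarrow>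
            NAP_cond_prob (\<lambda>_. 1) I (ratIco a0 b0) (ratIco a1 b1)
              = rconst I (of_rat (b0 - a0) / of_rat (b1 - a1)))"
proof (intro conjI allI impI)
  have mx: "maximalideal I F_ring" using fine by (simp add: fine_ideal_def)
  obtain M0 where M0: "\<And>m. m \<ge> M0 \<Longrightarrow> real (card (ratIco 0 1 \<inter> mu_set (fact m))) = real (fact m :: nat)"
    using count_ev[of "0::rat" 1] by auto
  {
    fix a b :: rat assume ab: "a < b"
    obtain M1 where M1: "\<And>m. m \<ge> M1 \<Longrightarrow> real (card (ratIco a b \<inter> mu_set (fact m))) = of_rat (b - a) * real (fact m :: nat)"
      using count_ev[OF ab] by auto
    show "NAP_prob (\<lambda>_. 1) I (ratIco a b)
              = rconst I (of_rat (b - a)) \<otimes>\<^bsub>F_ring Quot I\<^esub> NAP_prob (\<lambda>_. 1) I (ratIco 0 1)"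
      unfolding P_eq[OF fine contains] rconst_def J_mult[OF mx]
      by (rule E_lemma[OF fine contains], rule exI[of _ "max M0 M1"]) (auto simp: M0 M1)
    show "numerosity I (ratIco a b)
              = rconst I (of_rat (b - a)) \<otimes>\<^bsub>F_ring Quot I\<^esub> numerosity I (ratIco 0 1)"
      unfolding numerosity_def rconst_def J_mult[OF mx]
      by (rule E_lemma[OF fine contains], rule exI[of _ "max M0 M1"]) (auto simp: M0 M1)
  }
  fix a0 b0 a1 b1 :: rat assume ab0: "a0 < b0" and ab1: "a1 < b1" and sub: "ratIco a0 b0 \<subseteq> ratIco a1 b1"
  obtain M1 where M1: "\<And>m. m \<ge> M1 \<Longrightarrow> real (card (ratIco a0 b0 \<inter> mu_set (fact m))) = of_rat (b0 - a0) * real (fact m :: nat)"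
    using count_ev[OF ab0] by auto
  obtain M2 where M2: "\<And>m. m \<ge> M2 \<Longrightarrow> real (card (ratIco a1 b1 \<inter> mu_set (fact m))) = of_rat (b1 - a1) * real (fact m :: nat)"
    using count_ev[OF ab1] by auto
  have r1: "(of_rat (b1 - a1) :: real) > 0" using ab1 by simp
  have inv: "inv\<^bsub>F_ring Quot I\<^esub> Jproj I (\<lambda>L. real (card (ratIco a1 b1 \<inter> fset L)) / real (card (fset L)))
     = Jproj I (\<lambda>L. real (card (fset L)) / real (card (ratIco a1 b1 \<inter> fset L)))"
  proof (rule U_lemma[OF fine contains], rule exI[of _ M2], intro allI impI)
    fix m L assume m: "M2 \<le> m" and L: "fset L = mu_set (fact m)"
    have h1: "real (card (fset L)) > 0" using ne_mu[OF L] by simp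
    have h2: "real (card (ratIco a1 b1 \<inter> fset L)) > 0" using M2[OF m] L r1 by simp
    show "real (card (ratIco a1 b1 \<inter> fset L)) / real (card (fset L)) *
         (real (card (fset L)) / real (card (ratIco a1 b1 \<inter> fset L))) = 1"
      by (rule divmul1) (use h1 h2 in linarith)+
  qed
  have int: "ratIco a0 b0 \<inter> ratIco a1 b1 = ratIco a0 b0" using sub by blast
  show "NAP_cond_prob (\<lambda>_. 1) I (ratIco a0 b0) (ratIco a1 b1)
              = rconst I (of_rat (b0 - a0) / of_rat (b1 - a1))"
    unfolding NAP_cond_prob_def int P_eq[OF fine contains] inv J_mult[OF mx] rconst_def
  proof (rule E_lemma[OF fine contains], rule exI[of _ "max M1 M2"], intro allI impI)
    fix m L assume m: "max M1 M2 \<le> m" and L: "fset L = mu_set (fact m)"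
    have "card (fset L) > 0" by (rule ne_mu[OF L])
    then show "real (card (ratIco a0 b0 \<inter> fset L)) / real (card (fset L)) *
         (real (card (fset L)) / real (card (ratIco a1 b1 \<inter> fset L))) =
         real_of_rat (b0 - a0) / real_of_rat (b1 - a1)"
      using M1[of m] M2[of m] m L r1 by simp
  qed
qed

end
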